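(* Let $p\geq 5$ be a prime. Then \[h(-4p)\leq \frac{3\sqrt{p}}{2\pi}\bigl(\log p+5-2\log 6\bigr).\]
   Context: For a negative discriminant $D$, $h(D)$ denotes the class number of primitive positive definite binary quadratic forms of discriminant $D$. *)

theory Defs
  imports Complex_Main "HOL-Computational_Algebra.Primes"
begin

text \<open>Binary quadratic forms a x^2 + b x y + c y^2 are represented by triples (a,b,c).\<close>

type_synonym bqf = "int \<times> int \<times> int"

definition disc :: "bqf \<Rightarrow> int" where
  "disc f = (case f of (a, b, c) \<Rightarrow> b^2 - 4*a*c)"

text \<open>Primitive positive definite forms of discriminant D (for D < 0, positive
definiteness is equivalent to a > 0).\<close>
definition prim_pd_forms :: "int \<Rightarrow> bqf set" where
  "prim_pd_forms D = {(a, b, c). b^2 - 4*a*c = D \<and> D < 0 \<and> a > 0 \<and> gcd a (gcd b c) = 1}"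

text \<open>Action of the matrix (p q; r s): f(x,y) becomes f(p x + q y, r x + s y).\<close>
definition bqf_act :: "int \<Rightarrow> int \<Rightarrow> int \<Rightarrow> int \<Rightarrow> bqf \<Rightarrow> bqf" where
  "bqf_act p q r s f = (case f of (a, b, c) \<Rightarrow>
     (a*p^2 + b*p*r + c*r^2,
      2*a*p*q + b*(p*s + q*r) + 2*c*r*s,
      a*q^2 + b*q*s + c*s^2))"

definition bqf_equiv :: "bqf \<Rightarrow> bqf \<Rightarrow> bool" where
  "bqf_equiv f g \<longleftrightarrow> (\<exists>p q r s. p*s - q*r = 1 \<and> g = bqf_act p q r s f)"

definition class_number :: "int \<Rightarrow> nat" where
  "class_number D = card (prim_pd_forms D //
      {(f, g). f \<in> prim_pd_forms D \<and> g \<in> prim_pd_forms D \<and> bqf_equiv f g})"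

end

theory Submission
  imports Defs "HOL-Analysis.Analysis"
begin

lemma act_comp:
  "bqf_act p2 q2 r2 s2 (bqf_act p1 q1 r1 s1 f) =
   bqf_act (p1 * p2 + q1 * r2) (p1 * q2 + q1 *  s2) (r1 * p2 + s1 * r2) (r1 * q2 + s1 *  s2) f"
  by (cases f) (simp add: bqf_act_def power2_eq_square algebra_simps)

lemma act_id: "bqf_act 1 0 0 1 f = f"
  by (cases f) (simp add: bqf_act_def)

lemma act_disc: "disc (bqf_act p q r s f) = (p *  s - q * r)^2  *  disc f"
  by (cases f) (simp add: bqf_act_def disc_def power2_eq_square algebra_simps)

lemma bqf_equiv_refl: "bqf_equiv f f"
  unfolding bqf_equiv_def using act_id by (metis diff_zero mult_1 mult_zero_left)

lemma bqf_equiv_trans: "bqf_equiv f g \<Longrightarrow> bqf_equiv g h \<Longrightarrow> bqf_equiv f h"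
  unfolding bqf_equiv_def
proof (elim exE conjE)
  fix p1 q1 r1 s1 p2 q2 r2 s2
  assume that: "p1 *  s1 - q1 * r1 = 1" "g = bqf_act p1 q1 r1 s1 f" "p2 *  s2 - q2 * r2 = 1" "h = bqf_act p2 q2 r2 s2 g"
  then show "\<exists>p q r s. p  *  s - q  *  r = 1 \<and> h = bqf_act p q r s f"
  proof -
    have "(p1 * p2 + q1 * r2) * (r1 * q2 + s1 *  s2) - (p1 * q2 + q1 *  s2) * (r1 * p2 + s1 * r2) = (p1 *  s1 - q1 * r1) * (p2 *  s2 - q2 * r2)"
      by (simp add: algebra_simps)
    then show ?thesis
      using that by (intro exI[of _ "p1 * p2 + q1 * r2"] exI[of _ "p1 * q2 + q1 *  s2"] exI[of _ "r1 * p2 + s1 * r2"]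
         exI[of _ "r1 * q2 + s1 *  s2"]) (simp add: act_comp)
  qed
qed

lemma bqf_equiv_sym: "bqf_equiv f g \<Longrightarrow> bqf_equiv g f"
  unfolding bqf_equiv_def
proof (elim exE conjE)
  fix p q r s assume d: "p *  s - q * r = 1" and g: "g = bqf_act p q r s f"
  have "bqf_act s (-q) (-r) p g = bqf_act (p *  s - q * r) 0 0 (p *  s - q * r) f"
    by (simp add: g act_comp algebra_simps)
  also have "\<dots> = f" using d act_id by simp
  finally show "\<exists>p' q' r' s'. p'  *  s' - q'  *  r' = 1 \<and> f = bqf_act p' q' r' s' g"
    using d by (intro exI[of _ s] exI[of _ "-q"] exI[of _ "-r"] exI[of _ p]) (auto simp: algebra_simps)
qed

lemma act_dvd:
  assumes "(d::int) dvd a" "d dvd b" "d dvd c" "bqf_act p q r s (a,b,c) = (a',b',c')"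
  shows "d dvd a'" "d dvd b'" "d dvd c'"
  using assms by (auto simp: bqf_act_def power2_eq_square)

lemma act_prim:
  assumes "gcd a (gcd b c) = 1" "p *  s - q * r = 1" "bqf_act p q r s (a,b,c) = (a',b',c')"
  shows "gcd a' (gcd b' c') = 1"
proof -
  let ?g = "gcd a' (gcd b' c')"
  have inv: "bqf_act s (-q) (-r) p (a',b',c') = (a,b,c)"
  proof -
    have "bqf_act s (-q) (-r) p (a',b',c') = bqf_act (p *  s - q * r) 0 0 (p *  s - q * r) (a,b,c)"
      using assms(3)[symmetric] by (simp add: act_comp algebra_simps)
    also have "\<dots> = (a,b,c)" using assms(2) act_id by simp
    finally show ?thesis .
  qed
  have d1: "?g dvd a'" "?g dvd b'" "?g dvd c'" by (meson gcd_dvd1 gcd_dvd2 dvd_trans)+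
  note X = act_dvd[OF d1 inv]
  hence "?g dvd 1" using assms(1) X by (metis gcd_greatest)
  thus ?thesis by simp
qed

definition reduced :: "bqf \<Rightarrow> bool" where
  "reduced f = (case f of (a,b,c) \<Rightarrow> -a < b \<and> b \<le> a \<and> a \<le> c)"

lemma act_in_prim:
  assumes "(a,b,c) \<in> prim_pd_forms D" "p *  s - q * r = 1" "bqf_act p q r s (a,b,c) = (a',b',c')" "a' > 0"
  shows "(a',b',c') \<in> prim_pd_forms D"
proof -
  have "disc (a',b',c') = disc (a,b,c)" using act_disc[of p q r s "(a,b,c)"] assms(2,3) by simp
  moreover have "gcd a' (gcd b' c') = 1" using act_prim[OF _ assms(2,3)] assms(1) by (simp add: prim_pd_forms_def)
  ultimately show ?thesis using assms(1,4) by (simp add: prim_pd_forms_def disc_def)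
qed

lemma reduce_ex:
  "\<And>a b c. nat a = n \<Longrightarrow> (a,b,c) \<in> prim_pd_forms D \<Longrightarrow>
     \<exists>g \<in> prim_pd_forms D. reduced g \<and> bqf_equiv (a,b,c) g"
proof (induction n rule: less_induct)
  case (less n a b c)
  note f = less.prems(2)
  have apos: "a > 0" and Dneg: "D < 0" and dsc: "b^2 - 4 * a * c = D" using f by (auto simp: prim_pd_forms_def)
  define t where "t = (a - b) div (2 * a)"
  define b' where "b' = 2 * a * t + b"
  define c' where "c' = a * t^2 + b * t + c"
  have act1: "bqf_act 1 t 0 1 (a,b,c) = (a,b',c')"
    by (simp add: bqf_act_def b'_def c'_def power2_eq_square algebra_simps)
  have f1: "(a,b',c') \<in> prim_pd_forms D" by (rule act_in_prim[OF f _ act1 apos]) simp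
  have e1: "bqf_equiv (a,b,c) (a,b',c')" unfolding bqf_equiv_def
    using act1 by (intro exI[of _ 1] exI[of _ t] exI[of _ 0] exI[of _ 1]) simp
  have bb: "-a < b'" "b' \<le> a"
  proof -
    have "a - b = 2 * a * t + (a - b) mod (2 * a)" by (simp add: t_def)
    moreover have "0 \<le> (a - b) mod (2 * a)" "(a - b) mod (2 * a) < 2 * a" using apos by auto
    ultimately show "-a < b'" "b' \<le> a" unfolding b'_def by linarith+
  qed
  have dsc1: "b'^2 - 4 * a * c' = D" using f1 by (simp add: prim_pd_forms_def)
  show ?case
  proof (cases "a \<le> c'")
    case True
    then show ?thesis using f1 e1 bb by (intro bexI[of _ "(a,b',c')"]) (auto simp: reduced_def)
  next
    case False
    have "4 * a * c' > 0" using dsc1 Dneg by (smt (verit) zero_le_power2)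
    hence cpos: "c' > 0" using apos by (simp add: zero_less_mult_iff)
    have act2: "bqf_act 0 (-1) 1 0 (a,b',c') = (c',-b',a)" by (simp add: bqf_act_def)
    have f2: "(c',-b',a) \<in> prim_pd_forms D" by (rule act_in_prim[OF f1 _ act2 cpos]) simp
    have e2: "bqf_equiv (a,b',c') (c',-b',a)" unfolding bqf_equiv_def
      using act2 by (intro exI[of _ 0] exI[of _ "-1"] exI[of _ 1] exI[of _ 0]) simp
    have "nat c' < n" using False less.prems(1) cpos by auto
    from less.IH[OF this refl f2] obtain g where "g \<in> prim_pd_forms D" "reduced g" "bqf_equiv (c',-b',a) g"
      by blast
    then show ?thesis using e1 e2 bqf_equiv_trans by blast
  qed
qed

lemma reduce_ex': "f \<in> prim_pd_forms D \<Longrightarrow> \<exists>g \<in> prim_pd_forms D. reduced g \<and> bqf_equiv f g"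
  by (cases f) (use reduce_ex[OF refl] in blast)

definition rel :: "int \<Rightarrow> (bqf \<times> bqf) set" where
  "rel D = {(f, g). f \<in> prim_pd_forms D \<and> g \<in> prim_pd_forms D \<and> bqf_equiv f g}"

lemma equiv_rel: "equiv (prim_pd_forms D) (rel D)"
  unfolding equiv_def refl_on_def sym_def trans_def rel_def
  using bqf_equiv_refl bqf_equiv_sym bqf_equiv_trans by blast

lemma class_number_le_reduced:
  assumes "finite {g \<in> prim_pd_forms D. reduced g}"
  shows "class_number D \<le> card {g \<in> prim_pd_forms D. reduced g}"
proof -
  let ?R = "{g \<in> prim_pd_forms D. reduced g}"
  have "prim_pd_forms D // rel D \<subseteq> (\<lambda>g. rel D `` {g}) ` ?R"
  proof
    fix C assume "C \<in> prim_pd_forms D // rel D"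
    then obtain f where f: "f \<in> prim_pd_forms D" "C = rel D `` {f}" by (auto elim: quotientE)
    obtain g where g: "g \<in> prim_pd_forms D" "reduced g" "bqf_equiv f g" using reduce_ex'[OF f(1)] by blast
    have "(f,g) \<in> rel D" using f g by (simp add: rel_def)
    hence "rel D `` {f} = rel D `` {g}" using equiv_class_eq[OF equiv_rel] by blast
    thus "C \<in> (\<lambda>g. rel D `` {g}) ` ?R" using f g by blast
  qed
  hence "card (prim_pd_forms D // rel D) \<le> card ((\<lambda>g. rel D `` {g}) ` ?R)"
    using assms by (intro card_mono) auto
  also have "\<dots> \<le> card ?R" using assms card_image_le by blast
  finally show ?thesis by (simp add: class_number_def rel_def)
qed

definition Pairs :: "int \<Rightarrow> int \<Rightarrow> (int \<times> int) set" where
  "Pairs p X = {(a,k). 1 \<le> a \<and> a \<le> X \<and> -a < 2 * k \<and> 2 * k \<le> a \<and> a dvd k^2 + p}"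

lemma finite_Pairs: "finite (Pairs p X)"
proof -
  have "Pairs p X \<subseteq> {1..X} \<times> {-X..X}" unfolding Pairs_def by auto
  thus ?thesis by (rule finite_subset) auto
qed

lemma reduced_sub:
  assumes X: "\<And>a::int. 3 * a^2 \<le> 4 * p \<Longrightarrow> a \<le> X"
  shows "{g \<in> prim_pd_forms (-4 * p). reduced g} \<subseteq> (\<lambda>(a,k). (a, 2 * k, (k^2+p) div a)) ` Pairs p X"
proof
  fix g assume g: "g \<in> {g \<in> prim_pd_forms (-4 * p). reduced g}"
  obtain a b c where gg: "g = (a,b,c)" by (cases g)
  have apos: "a > 0" and dsc: "b^2 - 4 * a * c = -4 * p" and red: "-a < b" "b \<le> a" "a \<le> c"
    using g gg by (auto simp: prim_pd_forms_def reduced_def)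
  have "b^2 = 2 * (2 * a * c - 2 * p)" using dsc by simp
  hence "even (b^2)" by simp
  hence "even b" by simp
  then obtain k where bk: "b = 2 * k" by blast
  have ack: "a * c = k^2 + p" using dsc bk by (simp add: power2_eq_square algebra_simps)
  have advd: "a dvd k^2 + p" using ack by (metis dvd_triv_left)
  have cdef: "c = (k^2+p) div a" using apos by (simp flip: ack)
  have "a * a \<le> a * c" using red apos by simp
  moreover have "4 * k^2 \<le> a^2"
  proof -
    have "\<bar>2 * k\<bar> \<le> a" using red bk by auto
    hence "\<bar>2 * k\<bar>^2 \<le> a^2" by (rule power_mono) simp
    thus ?thesis by (simp add: power_mult_distrib)
  qed
  ultimately have "a^2 \<le> k^2 + p" "4 * k^2 \<le> a^2" using ack by (simp_all add: power2_eq_square)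
  hence "3 * a^2 \<le> 4 * p" by linarith
  hence "a \<le> X" by (rule X)
  hence "(a,k) \<in> Pairs p X" using apos red bk advd by (auto simp: Pairs_def)
  moreover have "g = (\<lambda>(a,k). (a, 2 * k, (k^2+p) div a)) (a,k)" using gg bk cdef by simp
  ultimately show "g \<in> (\<lambda>(a,k). (a, 2 * k, (k^2+p) div a)) ` Pairs p X" by (rule rev_image_eqI)
qed

lemma class_number_le_Pairs:
  assumes X: "\<And>a::int. 3 * a^2 \<le> 4 * p \<Longrightarrow> a \<le> X"
  shows "class_number (-4 * p) \<le> card (Pairs p X)"
proof -
  let ?R = "{g \<in> prim_pd_forms (-4 * p). reduced g}"
  let ?h = "\<lambda>(a,k). (a, 2 * k, (k^2+p) div a)"
  have sub: "?R \<subseteq> ?h ` Pairs p X" by (rule reduced_sub[OF X])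
  have fi: "finite (?h ` Pairs p X)" using finite_Pairs by (rule finite_imageI)
  have fin: "finite ?R" using sub fi by (rule finite_subset)
  have "class_number (-4 * p) \<le> card ?R" by (rule class_number_le_reduced[OF fin])
  also have "\<dots> \<le> card (?h ` Pairs p X)" by (rule card_mono[OF fi sub])
  also have "\<dots> \<le> card (Pairs p X)" by (rule card_image_le[OF finite_Pairs])
  finally show ?thesis .
qed

lemma two_pow_decomp:
  fixes a :: int
  shows "a > 0 \<Longrightarrow> \<exists>e m. a = 2^e  *  m \<and> odd m \<and> m > 0"
proof (induction "nat a" arbitrary: a rule: less_induct)
  case less
  show ?case
  proof (cases "odd a")
    case True then show ?thesis using less.prems by (intro exI[of _ 0] exI[of _ a]) simp
  next
    case False
    then obtain b where b: "a = 2 * b" by blast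
    have "b > 0" "nat b < nat a" using b less.prems by auto
    from less.hyps[OF this(2) this(1)] obtain e m where "b = 2^e * m" "odd m" "m > 0" by blast
    then show ?thesis using b by (intro exI[of _ "Suc e"] exI[of _ m]) simp
  qed
qed

lemma mult_gcd_dvd:
  fixes m x y :: int
  assumes "m dvd x * y"
  shows "m dvd gcd m x  *  gcd m y"
proof -
  have "m dvd gcd (x * y) (m * y)" using assms by simp
  also have "gcd (x * y) (m * y) = \<bar>y\<bar>  *  gcd x m" by (metis gcd_mult_distrib_int mult.commute)
  finally have "m dvd \<bar>y  *  gcd m x\<bar>" by (simp add: abs_mult gcd.commute)
  hence 1: "m dvd gcd m x  *  y" by (simp add: mult.commute)
  have "m dvd gcd (gcd m x  *  y) (gcd m x  *  m)" using 1 by simp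
  also have "gcd (gcd m x  *  y) (gcd m x  *  m) = \<bar>gcd m x\<bar>  *  gcd y m" by (metis gcd_mult_distrib_int)
  finally show ?thesis by (simp add: gcd.commute)
qed

lemma unitary_split:
  fixes m k k0 p :: int
  assumes m: "odd m" "m > 0" and cop: "coprime m k0"
    and dk: "m dvd k^2 + p" and dk0: "m dvd k0^2 + p"
  shows "gcd m (k - k0)  *  gcd m (k + k0) = m" "coprime (gcd m (k - k0)) (gcd m (k + k0))"
proof -
  let ?d = "gcd m (k - k0)" and ?f = "gcd m (k + k0)"
  show cf: "coprime ?d ?f"
  proof (rule coprimeI)
    fix g assume g: "g dvd ?d" "g dvd ?f"
    hence "g dvd (k + k0) - (k - k0)" "g dvd m" by (meson dvd_diff gcd_dvd2 dvd_trans gcd_dvd1)+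
    hence "g dvd 2 * k0" "g dvd m" by (simp_all add: algebra_simps mult_2)
    moreover have "coprime m (2 * k0)" using m cop by simp
    ultimately show "is_unit g" by (meson coprime_common_divisor)
  qed
  have "m dvd (k - k0)  *  (k + k0)"
  proof -
    have "(k - k0)  *  (k + k0) = (k^2 + p) - (k0^2 + p)" by (simp add: power2_eq_square algebra_simps)
    thus ?thesis using dvd_diff[OF dk dk0] by simp
  qed
  hence 1: "m dvd ?d  *  ?f" by (rule mult_gcd_dvd)
  have 2: "?d  *  ?f dvd m" using cf by (simp add: divides_mult)
  show "?d  *  ?f = m" using 1 2 m by (intro zdvd_antisym_nonneg) auto
qed

definition S2 :: "nat \<Rightarrow> int \<Rightarrow> int set" where
  "S2 e p = {r. 0 \<le> r \<and> r < 2^e \<and> 2^e dvd r^2 + p}"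

lemma finite_S2: "finite (S2 e p)"
  by (rule finite_subset[of _ "{0..<2^e}"]) (auto simp: S2_def)

lemma S2_odd:
  assumes "odd p" "e \<ge> 1" "r \<in> S2 e p" shows "odd r"
proof -
  have "(2::int) dvd 2^e" using assms(2) by (simp add: dvd_power)
  moreover have "2^e dvd r^2 + p" using assms(3) unfolding S2_def by blast
  ultimately have "even (r^2 + p)" by (rule dvd_trans)
  hence "odd (r^2)" using assms(1) by (metis even_add)
  thus ?thesis by simp
qed

lemma S2_key:
  fixes r r0 p :: int
  assumes e: "e \<ge> 3" and p: "odd p" and r: "r \<in> S2 e p" and r0: "r0 \<in> S2 e p"
  shows "r \<in> {r0 mod 2^e, (r0 + 2^(e-1)) mod 2^e, (-r0) mod 2^e, (-r0 + 2^(e-1)) mod 2^e}"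
proof -
  have ro: "odd r" "odd r0" using S2_odd[OF p _ r] S2_odd[OF p _ r0] e by auto
  have dvd: "2^e dvd (r - r0)  *  (r + r0)"
  proof -
    have "(r - r0)  *  (r + r0) = (r^2 + p) - (r0^2 + p)" by (simp add: power2_eq_square algebra_simps)
    moreover have "2^e dvd (r^2 + p) - (r0^2 + p)" using r r0 unfolding S2_def by (intro dvd_diff) auto
    ultimately show ?thesis by simp
  qed
  have "even (r - r0)" "even (r + r0)" using ro by auto
  then obtain u v where u: "r - r0 = 2 * u" and v: "r + r0 = 2 * v" by (meson evenE)
  have uv: "u + v = r" using u v by linarith
  obtain n where en: "e = Suc (Suc (Suc n))" using e by (metis add.commute add_Suc_right le_Suc_ex numeral_3_eq_3)
  have e2: "(2::int)^e = 4  *  2^(e-2)" using en by simp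
  have "4  *  2^(e-2) dvd 4  *  (u * v)" using dvd e2 u v by (simp add: algebra_simps)
  hence d2: "2^(e-2) dvd u * v" by (simp add: mult_dvd_mono)
  have e1: "(2::int)^(e-1) = 2  *  2^(e-2)" using en by simp
  have A: "2^(e-1) dvd r - r0 \<or> 2^(e-1) dvd r + r0"
  proof (cases "odd u")
    case True
    hence "coprime (2^(e-2)) u" by simp
    hence "2^(e-2) dvd v" using d2 by (simp add: coprime_dvd_mult_right_iff)
    thus ?thesis using v e1 by simp
  next
    case False
    hence "odd v" using uv ro by auto
    hence "coprime (2^(e-2)) v" by simp
    hence "2^(e-2) dvd u" using d2 by (simp add: coprime_dvd_mult_left_iff)
    thus ?thesis using u e1 by simp
  qed
  have rr: "r = r mod 2^e" using r unfolding S2_def by simp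
  have ee: "(2::int)^e = 2  *  2^(e-1)" using en by simp
  have B: "r mod 2^e = s mod 2^e \<or> r mod 2^e = (s + 2^(e-1)) mod 2^e" if hs: "2^(e-1) dvd r - s" for s
  proof -
    obtain j where j: "r - s = 2^(e-1)  *  j" using hs by blast
    show ?thesis
    proof (cases "even j")
      case True
      then obtain i where "j = 2 * i" by blast
      hence "r = s + 2^e  *  i" using j ee by (simp add: algebra_simps)
      thus ?thesis by simp
    next
      case False
      then obtain i where "j = 2 * i + 1" using oddE by blast
      hence "r = (s + 2^(e-1)) + 2^e  *  i" using j ee by (simp add: algebra_simps)
      thus ?thesis by simp
    qed
  qed
  show ?thesis
  proof (cases "2^(e-1) dvd r - r0")
    case True
    from B[OF this] rr show ?thesis by auto
  next
    case False
    hence "2^(e-1) dvd r - (-r0)" using A by simp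
    from B[OF this] rr show ?thesis by auto
  qed
qed

definition cwe :: "nat \<Rightarrow> nat" where
  "cwe e = (if e \<le> 1 then 1 else if e = 2 then 2 else 4)"

lemma card4: "card {w,x,y,z::'a} \<le> 4"
  by (simp add: card_insert_if)

lemma card_S2:
  fixes p :: int assumes p: "odd p"
  shows "card (S2 e p) \<le> cwe e"
proof -
  consider "e = 0" | "e = 1" | "e = 2" | "e \<ge> 3" by linarith
  then show ?thesis
  proof cases
    case 1
    hence "S2 e p \<subseteq> {0}" by (auto simp: S2_def)
    hence "card (S2 e p) \<le> card {0::int}" by (intro card_mono) auto
    thus ?thesis using 1 by (simp add: cwe_def)
  next
    case 2
    have "S2 e p \<subseteq> {1}"
    proof
      fix r assume r: "r \<in> S2 e p"
      hence "odd r" "0 \<le> r" "r < 2" using S2_odd[OF p _ r] 2 by (auto simp: S2_def)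
      hence "r = 1" by presburger
      thus "r \<in> {1}" by simp
    qed
    hence "card (S2 e p) \<le> card {1::int}" by (intro card_mono) auto
    thus ?thesis using 2 by (simp add: cwe_def)
  next
    case 3
    have "S2 e p \<subseteq> {1,3}"
    proof
      fix r assume r: "r \<in> S2 e p"
      hence "odd r" "0 \<le> r" "r < 4" using S2_odd[OF p _ r] 3 by (auto simp: S2_def)
      hence "r = 1 \<or> r = 3" by presburger
      thus "r \<in> {1,3}" by simp
    qed
    hence "card (S2 e p) \<le> card {1::int,3}" by (intro card_mono) auto
    thus ?thesis using 3 by (simp add: cwe_def)
  next
    case 4
    show ?thesis
    proof (cases "S2 e p = {}")
      case True thus ?thesis by simp
    next
      case False
      then obtain r0 where r0: "r0 \<in> S2 e p" by blast
      have "S2 e p \<subseteq> {r0 mod 2^e, (r0 + 2^(e-1)) mod 2^e, (-r0) mod 2^e, (-r0 + 2^(e-1)) mod 2^e}"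
        using S2_key[OF 4 p _ r0] by blast
      hence "card (S2 e p) \<le> card {r0 mod 2^e, (r0 + 2^(e-1)) mod 2^e, (-r0) mod 2^e, (-r0 + 2^(e-1)) mod 2^e}"
        by (intro card_mono) auto
      also have "\<dots> \<le> 4" by (rule card4)
      finally show ?thesis using 4 by (simp add: cwe_def)
    qed
  qed
qed

definition K :: "int \<Rightarrow> int \<Rightarrow> int set" where
  "K p a = {k. -a < 2 * k \<and> 2 * k \<le> a \<and> a dvd k^2 + p}"

definition Uo :: "int \<Rightarrow> nat" where
  "Uo a = card {d. 0 < d \<and> d dvd a \<and> odd d \<and> coprime d (a div d)}"

definition cw :: "int \<Rightarrow> nat" where
  "cw a = 1 + (if 4 dvd a then 1 else 0) + (if 8 dvd a then 2 else 0)"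

lemma pow2_dvd_iff: "((2::int)^j dvd 2^e  *  m) \<longleftrightarrow> j \<le> e" if "odd m"
proof -
  have "coprime ((2::int)^j) m" using that by simp
  hence "((2::int)^j dvd 2^e  *  m) \<longleftrightarrow> (2::int)^j dvd 2^e" by (simp add: coprime_dvd_mult_left_iff)
  also have "\<dots> \<longleftrightarrow> int (2^j) dvd int (2^e)" by simp
  also have "\<dots> \<longleftrightarrow> (2::nat)^j dvd 2^e" by (rule int_dvd_int_iff)
  also have "\<dots> \<longleftrightarrow> j \<le> e" by (rule dvd_power_iff_le) simp
  finally show ?thesis .
qed

lemma cw_eq: "odd m \<Longrightarrow> cw (2^e  *  m) = cwe e"
  using pow2_dvd_iff[of m 2 e] pow2_dvd_iff[of m 3 e] by (simp add: cw_def cwe_def)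

lemma finite_K: "finite (K p a)"
  by (rule finite_subset[of _ "{-\<bar>a\<bar>..\<bar>a\<bar>}"]) (auto simp: K_def)

lemma Dm_eq:
  fixes m a :: int
  assumes "odd m" "a = 2^e  *  m"
  shows "{d. 0 < d \<and> d dvd a \<and> odd d \<and> coprime d (a div d)} = {d. 0 < d \<and> d dvd m \<and> coprime d (m div d)}"
proof -
  have "(0 < d \<and> d dvd a \<and> odd d \<and> coprime d (a div d)) \<longleftrightarrow> (0 < d \<and> d dvd m \<and> coprime d (m div d))" for d
  proof
    assume d: "0 < d \<and> d dvd a \<and> odd d \<and> coprime d (a div d)"
    have "coprime d (2^e)" using d by simp
    hence dm: "d dvd m" using d assms(2) by (metis coprime_dvd_mult_left_iff coprime_dvd_mult_right_iff)
    then obtain t where t: "m = d * t" by blast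
    have "a div d = 2^e  *  t" using t assms(2) d by simp
    hence "coprime d (2^e  *  t)" using d by simp
    hence "coprime d t" by simp
    thus "0 < d \<and> d dvd m \<and> coprime d (m div d)" using d dm t by simp
  next
    assume d: "0 < d \<and> d dvd m \<and> coprime d (m div d)"
    then obtain t where t: "m = d * t" by blast
    have "odd d" using d assms(1) by (meson dvd_trans)
    moreover have "a div d = 2^e  *  t" using t assms(2) d by simp
    moreover have "coprime d t" using d t by (simp split: if_splits)
    ultimately show "0 < d \<and> d dvd a \<and> odd d \<and> coprime d (a div d)"
      using d assms(2) by simp
  qed
  thus ?thesis by blast
qed

lemma card_K:
  fixes p a :: int
  assumes p: "odd p" and a: "0 < a" and cop: "coprime a p"
  shows "card (K p a) \<le> Uo a  *  cw a"
proof (cases "K p a = {}")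
  case True thus ?thesis by simp
next
  case False
  then obtain k0 where k0: "k0 \<in> K p a" by blast
  obtain e m where em: "a = 2^e  *  m" "odd m" "m > 0" using two_pow_decomp[OF a] by blast
  let ?Dm = "{d. 0 < d \<and> d dvd m \<and> coprime d (m div d)}"
  have Uo: "Uo a = card ?Dm" unfolding Uo_def using Dm_eq[OF em(2,1)] by simp
  have cwa: "cw a = cwe e" using cw_eq[OF em(2)] em(1) by simp
  have mdvd: "m dvd a" using em by simp
  have edvd: "2^e dvd a" using em by simp
  have copm: "coprime m p" by (rule coprime_divisors[OF mdvd dvd_refl cop])
  have Kd: "a dvd k^2 + p" if "k \<in> K p a" for k using that by (simp add: K_def)
  have mk0: "coprime m k0"
  proof (rule coprimeI)
    fix g assume g: "g dvd m" "g dvd k0"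
    have "g dvd k0^2 + p" by (rule dvd_trans[OF g(1) dvd_trans[OF mdvd Kd[OF k0]]])
    moreover have "g dvd k0^2" using g(2) by (simp add: power2_eq_square)
    ultimately have "g dvd (k0^2 + p) - k0^2" by (rule dvd_diff)
    hence "g dvd p" by simp
    thus "is_unit g" using g(1) copm coprime_common_divisor by blast
  qed
  define \<phi> where "\<phi> k = (gcd m (k - k0), k mod 2^e)" for k
  have img: "\<phi> ` K p a \<subseteq> ?Dm \<times> S2 e p"
  proof
    fix x assume "x \<in> \<phi> ` K p a"
    then obtain k where k: "k \<in> K p a" "x = \<phi> k" by blast
    have mk: "m dvd k^2 + p" "m dvd k0^2 + p" using dvd_trans[OF mdvd Kd[OF k(1)]] dvd_trans[OF mdvd Kd[OF k0]] by simp_all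
    note us = unitary_split[OF em(2,3) mk0 mk]
    have "gcd m (k - k0) > 0" using em(3) by simp
    moreover have "m div gcd m (k - k0) = gcd m (k + k0)" using us(1) em(3)
      by (metis gcd_eq_0_iff less_irrefl nonzero_mult_div_cancel_left)
    ultimately have "gcd m (k - k0) \<in> ?Dm" using us(2) by simp
    moreover have "k mod 2^e \<in> S2 e p"
    proof -
      have "2^e dvd k^2 + p" using dvd_trans[OF edvd Kd[OF k(1)]] by simp
      moreover have "((k mod 2^e)^2 + p) mod 2^e = (k^2 + p) mod 2^e"
        by (metis mod_add_left_eq power_mod)
      ultimately have "2^e dvd (k mod 2^e)^2 + p" by (simp add: dvd_eq_mod_eq_0)
      thus ?thesis unfolding S2_def by simp
    qed
    ultimately show "x \<in> ?Dm \<times> S2 e p" using k(2) by (simp add: \<phi>_def)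
  qed
  have inj: "inj_on \<phi> (K p a)"
  proof (rule inj_onI)
    fix k k' assume k: "k \<in> K p a" and k': "k' \<in> K p a" and eq: "\<phi> k = \<phi> k'"
    have mk: "m dvd k^2 + p" "m dvd k0^2 + p" using dvd_trans[OF mdvd Kd[OF k]] dvd_trans[OF mdvd Kd[OF k0]] by simp_all
    have mk': "m dvd k'^2 + p" using dvd_trans[OF mdvd Kd[OF k']] by simp
    note us = unitary_split[OF em(2,3) mk0 mk]
    note us' = unitary_split[OF em(2,3) mk0 mk' mk(2)]
    have g1: "gcd m (k - k0) = gcd m (k' - k0)" and g2: "k mod 2^e = k' mod 2^e"
      using eq by (simp_all add: \<phi>_def)
    have nz: "gcd m (k' - k0) \<noteq> 0" using em(3) by simp
    have "gcd m (k' - k0)  *  gcd m (k + k0) = gcd m (k' - k0)  *  gcd m (k' + k0)"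
      using us(1) us'(1) g1 by simp
    hence g3: "gcd m (k + k0) = gcd m (k' + k0)" using nz mult_cancel_left by blast
    have "gcd m (k - k0) dvd (k - k0) - (k' - k0)" using g1 by (metis dvd_diff gcd_dvd2)
    hence d1: "gcd m (k - k0) dvd k - k'" by simp
    have "gcd m (k + k0) dvd (k + k0) - (k' + k0)" using g3 by (metis dvd_diff gcd_dvd2)
    hence d2: "gcd m (k + k0) dvd k - k'" by simp
    have "m dvd k - k'" using divides_mult[OF d1 d2 us(2)] us(1) by simp
    moreover have "2^e dvd k - k'" using g2 by (simp add: mod_eq_dvd_iff)
    moreover have "coprime ((2::int)^e) m" using em(2) by simp
    ultimately have "a dvd k - k'" using em(1) by (simp add: divides_mult)
    moreover have "-a < 2 * k" "2 * k \<le> a" "-a < 2 * k'" "2 * k' \<le> a" using k k' by (simp_all add: K_def)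
    hence "\<bar>k - k'\<bar> < a" unfolding abs_less_iff by linarith
    ultimately show "k = k'"
    proof (rule_tac ccontr)
      assume "a dvd k - k'" "\<bar>k - k'\<bar> < a" "k \<noteq> k'"
      hence "\<bar>a\<bar> \<le> \<bar>k - k'\<bar>" by (intro dvd_imp_le_int) simp_all
      thus False using \<open>\<bar>k - k'\<bar> < a\<close> by simp
    qed
  qed
  have "card (K p a) = card (\<phi> ` K p a)" using inj by (simp add: card_image)
  also have "\<dots> \<le> card (?Dm \<times> S2 e p)"
  proof (rule card_mono[OF _ img])
    have "?Dm \<subseteq> {1..m}"
    proof
      fix d assume "d \<in> ?Dm"
      hence "0 < d" "d dvd m" by simp_all
      thus "d \<in> {1..m}" using zdvd_imp_le[OF _ em(3)] by simp
    qed
    hence "finite ?Dm" by (rule finite_subset) simp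
    thus "finite (?Dm \<times> S2 e p)" using finite_S2 by simp
  qed
  also have "\<dots> = card ?Dm  *  card (S2 e p)" by (simp add: card_cartesian_product)
  also have "\<dots> \<le> Uo a  *  cw a" unfolding Uo cwa using card_S2[OF p] by simp
  finally show ?thesis .
qed

definition Wset :: "int \<Rightarrow> (int \<times> int) set" where
  "Wset Y = {(d,f). 0 < d \<and> 0 < f \<and> odd d \<and> d * f \<le> Y \<and> \<not>(3 dvd d \<and> 3 dvd f)}"

definition Wh :: "int \<Rightarrow> nat" where "Wh Y = card (Wset Y)"

definition Dset :: "int \<Rightarrow> int set" where
  "Dset a = {d. 0 < d \<and> d dvd a \<and> odd d \<and> coprime d (a div d)}"

lemma finite_Wset: "finite (Wset Y)"
proof -
  have "Wset Y \<subseteq> {1..Y} \<times> {1..Y}"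
  proof
    fix x assume x: "x \<in> Wset Y"
    obtain d f where df: "x = (d,f)" by (cases x)
    have h: "0 < d" "0 < f" "d * f \<le> Y" using x df by (auto simp: Wset_def)
    have "d * 1 \<le> d * f" "1 * f \<le> d * f" using h by (intro mult_left_mono mult_right_mono; simp)+
    hence "d \<le> Y" "f \<le> Y" using h by linarith+
    thus "x \<in> {1..Y} \<times> {1..Y}" using h df by auto
  qed
  thus ?thesis by (rule finite_subset) simp
qed

lemma finite_Dset: "0 < a \<Longrightarrow> finite (Dset a)"
  by (rule finite_subset[of _ "{1..a}"]) (auto simp: Dset_def intro: zdvd_imp_le)

lemma sum_Uo_le_Wh: "(\<Sum>a\<in>{1..Y}. Uo a) \<le> Wh Y"
proof -
  have "(\<Sum>a\<in>{1..Y}. Uo a) = card (Sigma {1..Y} Dset)"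
    by (subst card_SigmaI) (auto simp: Uo_def Dset_def[symmetric] finite_Dset)
  also have "\<dots> \<le> card (Wset Y)"
  proof -
    let ?h = "\<lambda>(a,d). (d, a div d)"
    have inj: "inj_on ?h (Sigma {1..Y} Dset)"
    proof (rule inj_onI)
      fix x y assume x: "x \<in> Sigma {1..Y} Dset" and y: "y \<in> Sigma {1..Y} Dset" and e: "?h x = ?h y"
      obtain a d where ad: "x = (a,d)" by (cases x)
      obtain a' d' where ad': "y = (a',d')" by (cases y)
      have "d dvd a" "d' dvd a'" using x y ad ad' by (auto simp: Dset_def)
      moreover have "d = d'" "a div d = a' div d'" using e ad ad' by auto
      ultimately have "a = a'" by (metis dvd_mult_div_cancel)
      thus "x = y" using ad ad' \<open>d = d'\<close> by simp
    qed
    have img: "?h ` Sigma {1..Y} Dset \<subseteq> Wset Y"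
    proof clarify
      fix a d assume a: "a \<in> {1..Y}" and d: "d \<in> Dset a"
      have d1: "0 < d" "d dvd a" "odd d" "coprime d (a div d)" using d by (auto simp: Dset_def)
      have ad: "d  *  (a div d) = a" using d1(2) by simp
      have "0 < a div d" using a d1 by (metis ad atLeastAtMost_iff zero_less_mult_pos int_one_le_iff_zero_less)
      moreover have "\<not>(3 dvd d \<and> 3 dvd a div d)"
      proof
        assume "3 dvd d \<and> 3 dvd a div d"
        hence "is_unit (3::int)" using d1(4) coprime_common_divisor by blast
        thus False by simp
      qed
      ultimately show "(d, a div d) \<in> Wset Y" using d1 ad a by (simp add: Wset_def)
    qed
    show ?thesis using card_inj_on_le[OF inj img finite_Wset] .
  qed
  finally show ?thesis by (simp add: Wh_def)
qed

lemma Uo_4: "0 < b \<Longrightarrow> Uo (2^j  *  b) = Uo b"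
proof -
  assume b: "0 < b"
  obtain e m where em: "b = 2^e  *  m" "odd m" "m > 0" using two_pow_decomp[OF b] by blast
  have eq: "2^j  *  b = 2^(j+e)  *  m" using em by (simp add: power_add)
  show ?thesis unfolding Uo_def Dm_eq[OF em(2) eq] Dm_eq[OF em(2) em(1)] ..
qed

lemma sum_mult_sub:
  fixes c :: int and g :: "int \<Rightarrow> nat"
  assumes c: "c > 0" and g: "\<And>b. 0 < b \<Longrightarrow> g (c * b) = g b"
  shows "(\<Sum>a\<in>{1..Y}. if c dvd a then g a else 0) = (\<Sum>b\<in>{1..Y div c}. g b)"
proof -
  have "(\<Sum>a\<in>{1..Y}. if c dvd a then g a else 0) = (\<Sum>a\<in>{a\<in>{1..Y}. c dvd a}. g a)"
    by (rule sum.inter_filter[symmetric]) simp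
  also have "{a\<in>{1..Y}. c dvd a} = (\<lambda>b. c * b) ` {1..Y div c}"
  proof (intro set_eqI iffI)
    fix a assume "a \<in> {a\<in>{1..Y}. c dvd a}"
    then obtain b where b: "a = c * b" "1 \<le> c * b" "c * b \<le> Y" by auto
    have "1 \<le> b" using b(2) c by (metis int_one_le_iff_zero_less zero_less_mult_pos)
    moreover have "(c * b) div c \<le> Y div c" using b(3) c by (intro zdiv_mono1) auto
    hence "b \<le> Y div c" using c by simp
    ultimately show "a \<in> (\<lambda>b. c * b) ` {1..Y div c}" using b(1) by auto
  next
    fix a assume "a \<in> (\<lambda>b. c * b) ` {1..Y div c}"
    then obtain b where bb: "b \<in> {1..Y div c}" "a = c * b" by blast
    hence b: "a = c * b" "1 \<le> b" "b \<le> Y div c" by auto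
    have "c * b \<le> c * (Y div c)" using b(3) c by simp
    also have "\<dots> \<le> Y" by (metis mult_div_mod_eq le_add_same_cancel1 pos_mod_sign c)
    finally have "c * b \<le> Y" .
    moreover have "1 \<le> c * b" using b(2) c by (simp add: int_one_le_iff_zero_less)
    ultimately show "a \<in> {a\<in>{1..Y}. c dvd a}" using b(1) by auto
  qed
  also have "(\<Sum>a\<in>(\<lambda>b. c * b) ` {1..Y div c}. g a) = (\<Sum>b\<in>{1..Y div c}. g (c * b))"
    using c by (subst sum.reindex) (auto simp: inj_on_def)
  also have "\<dots> = (\<Sum>b\<in>{1..Y div c}. g b)" using g by (intro sum.cong) auto
  finally show ?thesis .
qed

lemma sum_Uo_cw:
  "(\<Sum>a\<in>{1..Y}. Uo a  *  cw a) \<le> Wh Y + Wh (Y div 4) + 2  *  Wh (Y div 8)"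
proof -
  have "(\<Sum>a\<in>{1..Y}. Uo a  *  cw a) = (\<Sum>a\<in>{1..Y}. Uo a + (if 4 dvd a then Uo a else 0)
        + 2  *  (if 8 dvd a then Uo a else 0))"
    by (intro sum.cong) (simp_all add: cw_def)
  also have "\<dots> = (\<Sum>a\<in>{1..Y}. Uo a) + (\<Sum>a\<in>{1..Y}. if 4 dvd a then Uo a else 0)
        + 2  *  (\<Sum>a\<in>{1..Y}. if 8 dvd a then Uo a else 0)"
    by (simp add: sum.distrib sum_distrib_left)
  also have "(\<Sum>a\<in>{1..Y}. if 4 dvd a then Uo a else 0) = (\<Sum>b\<in>{1..Y div 4}. Uo b)"
    using Uo_4[of _ 2] by (intro sum_mult_sub) simp_all
  also have "(\<Sum>a\<in>{1..Y}. if 8 dvd a then Uo a else 0) = (\<Sum>b\<in>{1..Y div 8}. Uo b)"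
    using Uo_4[of _ 3] by (intro sum_mult_sub) simp_all
  finally show ?thesis using sum_Uo_le_Wh[of Y] sum_Uo_le_Wh[of "Y div 4"] sum_Uo_le_Wh[of "Y div 8"]
    by linarith
qed

lemma Pairs_bound:
  fixes p X :: int
  assumes p: "prime p" "odd p" and X: "X < p"
  shows "card (Pairs p X) \<le> Wh X + Wh (X div 4) + 2  *  Wh (X div 8)"
proof -
  have eq: "Pairs p X = Sigma {1..X} (K p)" by (auto simp: Pairs_def K_def)
  have "card (Pairs p X) = (\<Sum>a\<in>{1..X}. card (K p a))"
    unfolding eq by (rule card_SigmaI) (auto simp: finite_K)
  also have "\<dots> \<le> (\<Sum>a\<in>{1..X}. Uo a  *  cw a)"
  proof (rule sum_mono)
    fix a assume a: "a \<in> {1..X}"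
    have "\<not> p dvd a"
    proof
      assume "p dvd a"
      hence "p \<le> a" using a by (intro zdvd_imp_le) auto
      thus False using a X by simp
    qed
    hence "coprime p a" using p(1) by (intro prime_imp_coprime)
    hence "coprime a p" by (simp add: coprime_commute)
    thus "card (K p a) \<le> Uo a  *  cw a" using a p(2) by (intro card_K) auto
  qed
  also have "\<dots> \<le> Wh X + Wh (X div 4) + 2  *  Wh (X div 8)" by (rule sum_Uo_cw)
  finally show ?thesis .
qed

lemma ln2_lower: "693/1000 \<le> ln (2::real)"
proof -
  have "ln (2::real) \<in> {(\<Sum>k<3. 2 * ((2-1)/(2+1))^(2 * k+1) / of_nat (2 * k+1))..
          (\<Sum>k<3. 2 * ((2-1)/(2+1))^(2 * k+1) / of_nat (2 * k+1)) + 2 * (((2-1)/(2+1))^(2 * 3+1) / (1 - ((2-1)/(2+1))^2) / of_nat (2 * 3+1))}"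
    by (rule ln_approx_bounds) simp
  hence "(\<Sum>k<3. 2 * ((2-1)/(2+1))^(2 * k+1) / of_nat (2 * k+1)) \<le> ln (2::real)" by simp
  moreover have "(\<Sum>k<3. 2 * ((2-1)/(2+1::real))^(2 * k+1) / of_nat (2 * k+1)) = 2/3 + 2/81 + 2/1215"
    by (simp add: eval_nat_numeral)
  ultimately show ?thesis by simp
qed

lemma ln32_upper: "ln (3/2::real) \<le> 4055/10000"
proof -
  define y :: real where "y = 1/5"
  have y: "y = (3/2-1)/(3/2+1)" by (simp add: y_def)
  have "ln (3/2::real) \<in> {(\<Sum>k<2. 2 * y^(2 * k+1) / of_nat (2 * k+1))..
          (\<Sum>k<2. 2 * y^(2 * k+1) / of_nat (2 * k+1)) + 2 * (y^(2 * 2+1) / (1 - y^2) / of_nat (2 * 2+1))}"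
    unfolding y by (rule ln_approx_bounds) simp
  hence "ln (3/2::real) \<le> (\<Sum>k<2. 2 * y^(2 * k+1) / of_nat (2 * k+1)) + 2 * (y^(2 * 2+1) / (1 - y^2) / of_nat (2 * 2+1))"
    by simp
  also have "\<dots> = 2/5 + 2/375 + 2  *  ((1/3125) / (24/25) / 5)" by (simp add: y_def eval_nat_numeral)
  finally show ?thesis by simp
qed

lemma ln2_upper: "ln (2::real) \<le> 6932/10000"
proof -
  define y :: real where "y = 1/3"
  have y: "y = (2-1)/(2+1)" by (simp add: y_def)
  have "ln (2::real) \<in> {(\<Sum>k<3. 2 * y^(2 * k+1) / of_nat (2 * k+1))..
          (\<Sum>k<3. 2 * y^(2 * k+1) / of_nat (2 * k+1)) + 2 * (y^(2 * 3+1) / (1 - y^2) / of_nat (2 * 3+1))}"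
    unfolding y by (rule ln_approx_bounds) simp
  hence "ln (2::real) \<le> (\<Sum>k<3. 2 * y^(2 * k+1) / of_nat (2 * k+1)) + 2 * (y^(2 * 3+1) / (1 - y^2) / of_nat (2 * 3+1))"
    by simp
  also have "\<dots> = 2/3 + 2/81 + 2/1215 + 2  *  ((1/2187) / (8/9) / 7)" by (simp add: y_def eval_nat_numeral)
  finally show ?thesis by simp
qed

lemma ln3_upper: "ln (3::real) \<le> 10987/10000"
proof -
  have "ln (3::real) = ln (2  *  (3/2))" by simp
  also have "\<dots> = ln 2 + ln (3/2)" using ln_mult[of "2::real" "3/2"] by simp
  finally show ?thesis using ln32_upper ln2_upper by linarith
qed

lemma ln6_upper: "ln (6::real) \<le> 17919/10000"
proof -
  have "ln (6::real) = ln (2  *  3)" by simp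
  also have "\<dots> = ln 2 + ln 3" using ln_mult[of "2::real" "3"] by simp
  finally show ?thesis using ln3_upper ln2_upper by linarith
qed

lemma pi_upper: "pi \<le> 31416/10000" using pi_approx(2) by simp

definition Ho :: "int \<Rightarrow> real" where
  "Ho Y = (\<Sum>d\<in>{1..Y}. if odd d then 1 / real_of_int d else 0)"

lemma Ho_step: "Y \<ge> 0 \<Longrightarrow> Ho (Y+1) = Ho Y + (if odd (Y+1) then 1 / real_of_int (Y+1) else 0)"
proof -
  assume Y: "Y \<ge> 0"
  have "{1..Y+1} = insert (Y+1) {1..Y}" using Y by auto
  thus ?thesis unfolding Ho_def by simp
qed

lemma Ho_0: "Ho 0 = 0" by (simp add: Ho_def)
lemma Ho_1: "Ho 1 = 1" by (simp add: Ho_def)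

lemma Ho_odd_step: "Y \<ge> 0 \<Longrightarrow> odd Y \<Longrightarrow> Ho (Y+2) = Ho Y + 1 / real_of_int (Y+2)"
proof -
  assume Y: "Y \<ge> 0" "odd Y"
  have "Ho (Y+2) = Ho ((Y+1)+1)" by (simp add: add.assoc)
  also have "\<dots> = Ho (Y+1) + 1 / real_of_int (Y+2)" using Ho_step[of "Y+1"] Y by (simp add: add.assoc)
  also have "Ho (Y+1) = Ho Y" using Ho_step[of Y] Y by simp
  finally show ?thesis .
qed

lemma Ho_odd_bounds: "Ho (2  *  int n + 1) \<le> 1 + ln (real n + 1) / 2 \<and> ln (2  *  real n + 3) / 2 \<le> Ho (2  *  int n + 1)"
proof (induction n)
  case 0
  have "ln (3::real) \<le> 2" using ln3_upper by simp
  thus ?case by (simp add: Ho_1)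
next
  case (Suc n)
  have eq: "Ho (2  *  int (Suc n) + 1) = Ho (2  *  int n + 1) + 1 / (2  *  real n + 3)"
  proof -
    have "2  *  int (Suc n) + 1 = (2  *  int n + 1) + 2" by simp
    hence "Ho (2  *  int (Suc n) + 1) = Ho ((2  *  int n + 1) + 2)" by simp
    also have "\<dots> = Ho (2  *  int n + 1) + 1 / real_of_int (2  *  int n + 1 + 2)" by (rule Ho_odd_step) auto
    finally show ?thesis by simp
  qed
  have up: "1 / (2  *  real n + 3) \<le> (ln (real n + 2) - ln (real n + 1)) / 2"
  proof -
    have "ln (real n + 2) - ln (real n + 1) \<ge> 2  *  ((real n + 2) - (real n + 1)) / ((real n + 1) + (real n + 2))"
      by (rule ln_inverse_approx_ge) auto
    thus ?thesis by (simp add: field_simps)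
  qed
  have lo: "(ln (2  *  real n + 5) - ln (2  *  real n + 3)) / 2 \<le> 1 / (2  *  real n + 3)"
  proof -
    have "ln ((2  *  real n + 5) / (2  *  real n + 3)) \<le> (2  *  real n + 5) / (2  *  real n + 3) - 1"
      by (rule ln_le_minus_one) auto
    moreover have "ln ((2  *  real n + 5) / (2  *  real n + 3)) = ln (2  *  real n + 5) - ln (2  *  real n + 3)"
      using ln_div[of "2  *  real n + 5" "2  *  real n + 3"] by simp
    moreover have "(2  *  real n + 5) / (2  *  real n + 3) - 1 = 2 / (2  *  real n + 3)" by (simp add: field_simps)
    ultimately show ?thesis by simp
  qed
  show ?case using Suc.IH eq up lo by (simp add: algebra_simps)
qed

lemma Ho_upper: "Y \<ge> 1 \<Longrightarrow> Ho Y \<le> 1 + ln ((real_of_int Y + 1) / 2) / 2"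
proof -
  assume Y: "Y \<ge> 1"
  obtain n where n: "Y = 2  *  int n + 1 \<or> Y = 2  *  int n + 2"
  proof (cases "odd Y")
    case True
    then obtain k where "Y = 2 * k + 1" by (meson oddE)
    thus ?thesis using that[of "nat k"] Y by auto
  next
    case False
    then obtain k where "Y = 2 * k" by blast
    thus ?thesis using that[of "nat (k - 1)"] Y by auto
  qed
  show ?thesis
  proof (cases "Y = 2  *  int n + 1")
    case True
    have "ln ((real_of_int Y + 1) / 2) = ln (real n + 1)" using True by simp
    moreover have "Ho Y = Ho (2  *  int n + 1)" using True by simp
    ultimately show ?thesis using Ho_odd_bounds[of n] by linarith
  next
    case False
    hence Y2: "Y = 2  *  int n + 2" using n by simp
    have "Ho Y = Ho (2  *  int n + 1)" using Ho_step[of "2  *  int n + 1"] Y2 by (simp add: add.assoc)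
    also have "\<dots> \<le> 1 + ln (real n + 1) / 2" using Ho_odd_bounds[of n] by simp
    also have "ln (real n + 1) \<le> ln ((real_of_int Y + 1) / 2)" using Y2 by simp
    finally show ?thesis by simp
  qed
qed

lemma Ho_lower: "Y \<ge> 0 \<Longrightarrow> ln (real_of_int Y + 1) / 2 \<le> Ho Y"
proof -
  assume Y: "Y \<ge> 0"
  show ?thesis
  proof (cases "Y = 0")
    case True thus ?thesis by (simp add: Ho_0)
  next
    case False
    hence Y1: "Y \<ge> 1" using Y by simp
    obtain n where n: "Y = 2  *  int n + 1 \<or> Y = 2  *  int n + 2"
    proof (cases "odd Y")
      case True
      then obtain k where "Y = 2 * k + 1" by (meson oddE)
      thus ?thesis using that[of "nat k"] Y by auto
    next
      case False
      then obtain k where "Y = 2 * k" by blast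
      thus ?thesis using that[of "nat (k - 1)"] Y1 by auto
    qed
    show ?thesis
    proof (cases "Y = 2  *  int n + 1")
      case True
      have "ln (real_of_int Y + 1) \<le> ln (2  *  real n + 3)" using True by simp
      moreover have "Ho Y = Ho (2  *  int n + 1)" using True by simp
      ultimately show ?thesis using Ho_odd_bounds[of n] by linarith
    next
      case False
      hence Y2: "Y = 2  *  int n + 2" using n by simp
      have "Ho Y = Ho (2  *  int n + 1)" using Ho_step[of "2  *  int n + 1"] Y2 by (simp add: add.assoc)
      moreover have "ln (real_of_int Y + 1) = ln (2  *  real n + 3)" using Y2 by simp
      ultimately show ?thesis using Ho_odd_bounds[of n] by simp
    qed
  qed
qed

lemma le_div_iff_mult: "(0::int) < c \<Longrightarrow> (x \<le> Y div c) = (c * x \<le> Y)"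
proof
  assume c: "0 < c" and "x \<le> Y div c"
  hence "c * x \<le> c * (Y div c)" by simp
  also have "\<dots> \<le> Y" using c by (metis mult_div_mod_eq le_add_same_cancel1 pos_mod_sign)
  finally show "c * x \<le> Y" .
next
  assume c: "0 < c" and "c * x \<le> Y"
  hence "(c * x) div c \<le> Y div c" by (intro zdiv_mono1) auto
  thus "x \<le> Y div c" using c by simp
qed

lemma div_real_bounds:
  fixes Y d :: int assumes d: "0 < d"
  shows "real_of_int (Y div d) \<le> real_of_int Y / real_of_int d"
    and "real_of_int Y / real_of_int d - 1 \<le> real_of_int (Y div d)"
proof -
  have e: "Y = d  *  (Y div d) + Y mod d" by simp
  have m: "0 \<le> Y mod d" "Y mod d < d" using d by auto
  have "real_of_int d  *  real_of_int (Y div d) \<le> real_of_int Y"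
    using m e by (metis le_add_same_cancel1 of_int_le_iff of_int_mult)
  thus "real_of_int (Y div d) \<le> real_of_int Y / real_of_int d" using d by (simp add: field_simps)
  have "real_of_int Y - real_of_int d \<le> real_of_int d  *  real_of_int (Y div d)"
  proof -
    have "Y - d \<le> d  *  (Y div d)" using m e by linarith
    thus ?thesis by (metis of_int_diff of_int_le_iff of_int_mult)
  qed
  thus "real_of_int Y / real_of_int d - 1 \<le> real_of_int (Y div d)" using d by (simp add: field_simps)
qed

definition Dhset :: "int \<Rightarrow> (int \<times> int) set" where
  "Dhset Y = {(d,f). 0 < d \<and> 0 < f \<and> odd d \<and> d * f \<le> Y}"

definition Dh :: "int \<Rightarrow> nat" where "Dh Y = card (Dhset Y)"

lemma finO: "finite {d\<in>{1..Y::int}. odd d}"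
  by (rule finite_subset[of _ "{1..Y}"]) auto

lemma Dhset_eq: "Dhset Y = Sigma {d\<in>{1..Y}. odd d} (\<lambda>d. {1..Y div d})"
proof (intro set_eqI iffI)
  fix x assume x: "x \<in> Dhset Y"
  obtain d f where df: "x = (d,f)" by (cases x)
  have h: "0 < d" "0 < f" "odd d" "d * f \<le> Y" using x df by (auto simp: Dhset_def)
  have "d * 1 \<le> d * f" using h by (intro mult_left_mono) auto
  hence "d \<le> Y" using h by linarith
  moreover have "f \<le> Y div d" using h le_div_iff_mult[of d f Y] by simp
  ultimately show "x \<in> Sigma {d\<in>{1..Y}. odd d} (\<lambda>d. {1..Y div d})" using h df by auto
next
  fix x assume x: "x \<in> Sigma {d\<in>{1..Y}. odd d} (\<lambda>d. {1..Y div d})"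
  obtain d f where df: "x = (d,f)" by (cases x)
  have h: "1 \<le> d" "d \<le> Y" "odd d" "1 \<le> f" "f \<le> Y div d" using x df by auto
  have "d * f \<le> Y" using h le_div_iff_mult[of d f Y] by simp
  thus "x \<in> Dhset Y" using h df by (auto simp: Dhset_def)
qed

lemma Dh_sum: "real (Dh Y) = (\<Sum>d\<in>{1..Y}. if odd d then real_of_int (Y div d) else 0)"
proof -
  have "Dh Y = (\<Sum>d\<in>{d\<in>{1..Y}. odd d}. card {1..Y div d})"
    unfolding Dh_def Dhset_eq by (intro card_SigmaI finO) simp
  also have "\<dots> = (\<Sum>d\<in>{d\<in>{1..Y}. odd d}. nat (Y div d))" by simp
  finally have "real (Dh Y) = (\<Sum>d\<in>{d\<in>{1..Y}. odd d}. real (nat (Y div d)))" by simp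
  also have "\<dots> = (\<Sum>d\<in>{d\<in>{1..Y}. odd d}. real_of_int (Y div d))"
  proof (rule sum.cong)
    fix d assume "d \<in> {d\<in>{1..Y}. odd d}"
    hence "0 \<le> Y div d" by (auto intro: pos_imp_zdiv_nonneg_iff[THEN iffD2])
    thus "real (nat (Y div d)) = real_of_int (Y div d)" by simp
  qed simp
  also have "\<dots> = (\<Sum>d\<in>{1..Y}. if odd d then real_of_int (Y div d) else 0)"
    by (rule sum.inter_filter) simp
  finally show ?thesis .
qed

definition Oc :: "int \<Rightarrow> real" where
  "Oc Y = (\<Sum>d\<in>{1..Y}. if odd d then 1 else 0)"

lemma Oc_exact: "2  *  Oc (int n) = real n + (if odd n then 1 else 0)"
proof (induction n)
  case 0 thus ?case by (simp add: Oc_def)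
next
  case (Suc n)
  have "{1..int (Suc n)} = insert (int n + 1) {1..int n}" by auto
  hence "Oc (int (Suc n)) = Oc (int n) + (if odd (int n + 1) then 1 else 0)" unfolding Oc_def by simp
  thus ?case using Suc.IH by auto
qed

lemma Oc_le: "Y \<ge> 0 \<Longrightarrow> Oc Y \<le> (real_of_int Y + 1) / 2"
proof -
  assume "Y \<ge> 0"
  then obtain n where "Y = int n" by (metis nonneg_eq_int)
  thus ?thesis using Oc_exact[of n] by (auto split: if_splits)
qed

lemma Dh_upper: "Y \<ge> 0 \<Longrightarrow> real (Dh Y) \<le> real_of_int Y  *  Ho Y"
proof -
  assume Y: "Y \<ge> 0"
  have "real (Dh Y) \<le> (\<Sum>d\<in>{1..Y}. if odd d then real_of_int Y  *  (1 / real_of_int d) else 0)"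
    unfolding Dh_sum using div_real_bounds(1) by (intro sum_mono) auto
  also have "\<dots> = real_of_int Y  *  Ho Y" unfolding Ho_def sum_distrib_left
    by (intro sum.cong) auto
  finally show ?thesis .
qed

lemma Dh_lower: "Y \<ge> 0 \<Longrightarrow> real_of_int Y  *  Ho Y - (real_of_int Y + 1) / 2 \<le> real (Dh Y)"
proof -
  assume Y: "Y \<ge> 0"
  have "real_of_int Y  *  Ho Y - Oc Y = (\<Sum>d\<in>{1..Y}. if odd d then real_of_int Y / real_of_int d - 1 else 0)"
    unfolding Ho_def Oc_def sum_distrib_left sum_subtractf[symmetric] by (intro sum.cong) auto
  also have "\<dots> \<le> real (Dh Y)"
    unfolding Dh_sum using div_real_bounds(2) by (intro sum_mono) auto
  finally show ?thesis using Oc_le[OF Y] by linarith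
qed

lemma Wh_Dh: "Wh Y + Dh (Y div 9) = Dh Y"
proof -
  let ?T = "{x \<in> Dhset Y. 3 dvd fst x \<and> 3 dvd snd x}"
  have fin: "finite (Dhset Y)"
    unfolding Dhset_eq by (intro finite_SigmaI finO) auto
  have un: "Dhset Y = Wset Y \<union> ?T" by (auto simp: Dhset_def Wset_def)
  have dis: "Wset Y \<inter> ?T = {}" by (auto simp: Wset_def)
  have finT: "finite ?T" using fin by simp
  have "card (Dhset Y) = card (Wset Y \<union> ?T)" by (rule arg_cong[OF un])
  also have "\<dots> = card (Wset Y) + card ?T" by (rule card_Un_disjoint[OF finite_Wset finT dis])
  finally have "card (Dhset Y) = card (Wset Y) + card ?T" .
  moreover have "card ?T = card (Dhset (Y div 9))"
  proof -
    have bij: "bij_betw (\<lambda>(d,f). (3 * d, 3 * f)) (Dhset (Y div 9)) ?T"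
    proof (rule bij_betwI')
      fix x y assume "x \<in> Dhset (Y div 9)" "y \<in> Dhset (Y div 9)"
      show "((\<lambda>(d,f). (3 * d, 3 * f)) x = (\<lambda>(d,f). (3 * d, 3 * f)) y) = (x = y)" by (cases x; cases y) auto
    next
      fix x assume x: "x \<in> Dhset (Y div 9)"
      obtain d f where df: "x = (d,f)" by (cases x)
      have h: "0 < d" "0 < f" "odd d" "d * f \<le> Y div 9" using x df by (auto simp: Dhset_def)
      have "9 * (d * f) \<le> Y" using h(4) le_div_iff_mult[of 9 "d * f" Y] by simp
      hence "(3 * d) * (3 * f) \<le> Y" by (simp add: algebra_simps)
      thus "(\<lambda>(d,f). (3 * d, 3 * f)) x \<in> ?T" using h df by (auto simp: Dhset_def)
    next
      fix y assume y: "y \<in> ?T"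
      obtain d f where df: "y = (d,f)" by (cases y)
      have h: "0 < d" "0 < f" "odd d" "d * f \<le> Y" "3 dvd d" "3 dvd f" using y df by (auto simp: Dhset_def)
      obtain d' f' where d': "d = 3 * d'" "f = 3 * f'" using h by (auto elim!: dvdE)
      have "9 * (d' * f') \<le> Y" using h(4) d' by (simp add: algebra_simps)
      hence "d' * f' \<le> Y div 9" using le_div_iff_mult[of 9 "d' * f'" Y] by simp
      moreover have "0 < d'" "0 < f'" "odd d'" using h d' by auto
      ultimately have "(d',f') \<in> Dhset (Y div 9)" by (simp add: Dhset_def)
      moreover have "y = (\<lambda>(d,f). (3 * d, 3 * f)) (d',f')" using df d' by simp
      ultimately show "\<exists>x\<in>Dhset (Y div 9). y = (\<lambda>(d,f). (3 * d, 3 * f)) x" by blast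
    qed
    thus ?thesis by (simp add: bij_betw_same_card)
  qed
  ultimately show ?thesis by (simp add: Wh_def Dh_def)
qed

definition bW :: "real \<Rightarrow> real" where
  "bW y = 4/9  *  (y  *  ln y) + 5/6  *  y + 4/9  *  ln (y + 1) + 1"

lemma ln_succ_le: "(y::real) > 0 \<Longrightarrow> ln (y + 1) \<le> ln y + 1 / y"
proof -
  assume y: "y > 0"
  have "ln ((y+1)/y) \<le> (y+1)/y - 1" by (rule ln_le_minus_one) (use y in simp)
  moreover have "ln ((y+1)/y) = ln (y+1) - ln y" using y by (simp add: ln_div)
  moreover have "(y+1)/y - 1 = 1/y" using y by (simp add: field_simps)
  ultimately show ?thesis by simp
qed

lemma Dh_0: "Dh 0 = 0"
proof -
  have "Dhset 0 = {}" by (auto simp: Dhset_def zero_less_mult_iff)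
    (metis not_le mult_pos_pos)
  thus ?thesis by (simp add: Dh_def)
qed

lemma lin_helper:
  fixes W y L1 B z E l9 A C D :: real
  assumes "W \<le> y + A / 2 - C / 2 - (E / 2 - (z + 1) / 2)"
    "(A - 8  *  L1 - D + 8  *  l9) / 9 \<le> E" "z \<le> y / 9" "A \<le> B + 1"
    "y  *  (693 / 1000) \<le> C" "D \<le> y  *  (2  *  (10987 / 10000))" "0 \<le> l9" "0 \<le> L1" "1 \<le> y"
  shows "W \<le> 4 / 9  *  B + 5 / 6  *  y + 4 / 9  *  L1 + 1"
  using assms by (simp add: field_simps)

lemma Wh_bound:
  fixes Y :: int assumes Y: "Y \<ge> 1"
  shows "real (Wh Y) \<le> bW (real_of_int Y)"
proof -
  define y where "y = real_of_int Y"
  have y1: "y \<ge> 1" using Y by (simp add: y_def)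
  define L1 where "L1 = ln (y + 1)"
  define Ly where "Ly = ln y"
  have l2: "693/1000 \<le> ln (2::real)" by (rule ln2_lower)
  have WD: "real (Wh Y) = real (Dh Y) - real (Dh (Y div 9))" using Wh_Dh[of Y] by linarith
  have DY: "real (Dh Y) \<le> y + y  *  L1 / 2 - y  *  ln 2 / 2"
  proof -
    have "real (Dh Y) \<le> y  *  Ho Y" using Dh_upper[of Y] Y by (simp add: y_def)
    also have "\<dots> \<le> y  *  (1 + ln ((y + 1) / 2) / 2)"
      using Ho_upper[OF Y] y1 by (intro mult_left_mono) (auto simp: y_def)
    also have "ln ((y + 1) / 2) = L1 - ln 2" using y1 by (simp add: L1_def ln_div)
    also have "y  *  (1 + (L1 - ln 2) / 2) = y + y  *  L1 / 2 - y  *  ln 2 / 2" by (simp add: algebra_simps diff_divide_distrib)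
    finally show ?thesis .
  qed
  have yL: "y  *  L1 \<le> y  *  Ly + 1"
  proof -
    have "y  *  L1 \<le> y  *  (Ly + 1 / y)" unfolding L1_def Ly_def
      using ln_succ_le[of y] y1 by (intro mult_left_mono) auto
    thus ?thesis using y1 by (simp add: algebra_simps)
  qed
  have y2: "y  *  ln 2 \<ge> y  *  (693/1000)" using l2 y1 by (intro mult_left_mono) auto
  have L1pos: "L1 \<ge> 0" using y1 by (simp add: L1_def)
  show ?thesis
  proof (cases "Y \<le> 8")
    case True
    hence "Y div 9 = 0" using Y by simp
    hence W: "real (Wh Y) \<le> y + y  *  L1 / 2 - y  *  ln 2 / 2" using WD DY by (simp add: Dh_0)
    have "y \<le> 8" using True by (simp add: y_def)
    have "Ly \<le> ln 8" unfolding Ly_def using \<open>y \<le> 8\<close> y1 by simp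
    also have "ln (8::real) = 3  *  ln 2"
    proof -
      have "ln ((2::real)^3) = 3  *  ln 2" using ln_realpow[of "2::real" 3] by simp
      thus ?thesis by simp
    qed
    also have "\<dots> \<le> 3  *  (6932/10000)" using ln2_upper by simp
    finally have Lyb: "Ly \<le> 3  *  (6932/10000)" .
    have "y  *  Ly \<le> y  *  (3  *  (6932/10000))" using Lyb y1 by (intro mult_left_mono) auto
    moreover have "y  *  Ly \<ge> 0" using y1 by (simp add: Ly_def)
    ultimately show ?thesis using W yL y2 L1pos y1 unfolding bW_def Ly_def[symmetric] L1_def[symmetric] y_def[symmetric]
      by linarith
  next
    case False
    define Z where "Z = Y div 9"
    define z where "z = real_of_int Z"
    have Z1: "Z \<ge> 1" using False by (simp add: Z_def)
    have z1: "z \<ge> 1" using Z1 by (simp add: z_def)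
    have zb: "z \<le> y / 9" "(y - 8) / 9 \<le> z"
    proof -
      have "9  *  Z \<le> Y" "Y \<le> 9  *  Z + 8" unfolding Z_def by linarith+
      hence "real_of_int (9  *  Z) \<le> real_of_int Y" "real_of_int Y \<le> real_of_int (9  *  Z + 8)"
        by (simp_all only: of_int_le_iff)
      thus "z \<le> y / 9" "(y - 8) / 9 \<le> z" unfolding z_def y_def by simp_all
    qed
    have DZ: "real (Dh Z) \<ge> z  *  ln (z + 1) / 2 - (z + 1) / 2"
    proof -
      have "z  *  Ho Z - (z + 1) / 2 \<le> real (Dh Z)" using Dh_lower[of Z] Z1 by (simp add: z_def)
      moreover have "z  *  (ln (z + 1) / 2) \<le> z  *  Ho Z"
        using Ho_lower[of Z] Z1 z1 by (intro mult_left_mono) (auto simp: z_def)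
      ultimately show ?thesis by simp
    qed
    have y9: "y \<ge> 9" using False by (simp add: y_def)
    have zl: "(y - 8) / 9  *  (L1 - ln 9) \<le> z  *  ln (z + 1)"
    proof (rule mult_mono)
      show "(y - 8) / 9 \<le> z" by (rule zb(2))
      have "L1 - ln 9 = ln ((y + 1) / 9)" using y1 by (simp add: L1_def ln_div)
      also have "\<dots> \<le> ln (z + 1)" using zb(2) y1 by (subst ln_le_cancel_iff) (auto simp: field_simps)
      finally show "L1 - ln 9 \<le> ln (z + 1)" .
      show "0 \<le> z" using z1 by simp
      have "ln 9 \<le> L1" unfolding L1_def using y9 by simp
      thus "0 \<le> L1 - ln 9" by simp
    qed
    have ln9: "ln (9::real) = 2  *  ln 3"
    proof -
      have "ln ((3::real)^2) = 2  *  ln 3" using ln_realpow[of "3::real" 2] by simp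
      thus ?thesis by simp
    qed
    have ln9u: "y  *  ln 9 \<le> y  *  (2  *  (10987/10000))" using ln9 ln3_upper y1 by (intro mult_left_mono) auto
    have ln9p: "ln (9::real) \<ge> 0" by simp
    have "(y - 8) / 9  *  (L1 - ln 9) = (y  *  L1 - 8  *  L1 - y  *  ln 9 + 8  *  ln 9) / 9" by (simp add: algebra_simps)
    with zl have zl': "(y  *  L1 - 8  *  L1 - y  *  ln 9 + 8  *  ln 9) / 9 \<le> z  *  ln (z + 1)" by simp
    have "real (Wh Y) \<le> y + y  *  L1 / 2 - y  *  ln 2 / 2 - (z  *  ln (z + 1) / 2 - (z + 1) / 2)"
      using WD DY DZ by (simp add: Z_def)
    from lin_helper[OF this zl' zb(1) yL y2 ln9u ln9p L1pos y1]
    show ?thesis unfolding bW_def Ly_def[symmetric] L1_def[symmetric] y_def[symmetric] .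
  qed
qed

lemma bW_mono: "1 \<le> u \<Longrightarrow> u \<le> v \<Longrightarrow> bW u \<le> bW v"
proof -
  assume uv: "1 \<le> u" "u \<le> v"
  have "u  *  ln u \<le> v  *  ln v" using uv by (intro mult_mono) auto
  moreover have "ln (u + 1) \<le> ln (v + 1)" using uv by simp
  ultimately show ?thesis unfolding bW_def using uv by linarith
qed

lemma Wh_div_bound:
  fixes X c :: int assumes c: "c > 0" and X: "X \<ge> c"
  shows "real (Wh (X div c)) \<le> bW (real_of_int X / real_of_int c)"
proof -
  have "1 \<le> X div c" using X c le_div_iff_mult[of c 1 X] by simp
  hence "real (Wh (X div c)) \<le> bW (real_of_int (X div c))" by (rule Wh_bound)
  also have "\<dots> \<le> bW (real_of_int X / real_of_int c)"
    using div_real_bounds(1)[OF c, of X] \<open>1 \<le> X div c\<close> by (intro bW_mono) auto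
  finally show ?thesis .
qed

lemma F_helper:
  fixes F x lx l2 L1 a4 a8 b4 b8 :: real
  assumes "F \<le> 4/9  *  (x  *  lx) + 5/6  *  x + 4/9  *  L1 + 1
              + (4/9  *  ((x/4)  *  (lx - 2 * l2)) + 5/6  *  (x/4) + 4/9  *  b4 + 1)
              + 2  *  (4/9  *  ((x/8)  *  (lx - 3 * l2)) + 5/6  *  (x/8) + 4/9  *  b8 + 1)"
    "b4 \<le> L1" "b8 \<le> L1" "0 \<le> b8"
  shows "F \<le> 2/3  *  (x  *  lx) - 5/9  *  (x  *  l2) + 5/4  *  x + 16/9  *  L1 + 4"
  using assms by (simp add: field_simps)

lemma F_upper:
  fixes X :: int assumes X: "X \<ge> 8"
  shows "real (Wh X + Wh (X div 4) + 2  *  Wh (X div 8)) \<le>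
    2/3  *  (real_of_int X  *  ln (real_of_int X)) - 5/9  *  (real_of_int X  *  ln 2) + 5/4  *  real_of_int X
      + 16/9  *  ln (real_of_int X + 1) + 4"
proof -
  define x where "x = real_of_int X"
  have x8: "x \<ge> 8" using X by (simp add: x_def)
  have w1: "real (Wh X) \<le> bW x" unfolding x_def by (rule Wh_bound) (use X in simp)
  have w4: "real (Wh (X div 4)) \<le> bW (x/4)" unfolding x_def using Wh_div_bound[of 4 X] X by simp
  have w8: "real (Wh (X div 8)) \<le> bW (x/8)" unfolding x_def using Wh_div_bound[of 8 X] X by simp
  have l4: "ln (x/4) = ln x - 2  *  ln 2"
  proof -
    have "ln (x/4) = ln x - ln 4" using x8 by (simp add: ln_div)
    moreover have "ln (4::real) = 2  *  ln 2" using ln_realpow[of "2::real" 2] by simp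
    ultimately show ?thesis by simp
  qed
  have l8: "ln (x/8) = ln x - 3  *  ln 2"
  proof -
    have "ln (x/8) = ln x - ln 8" using x8 by (simp add: ln_div)
    moreover have "ln (8::real) = 3  *  ln 2" using ln_realpow[of "2::real" 3] by simp
    ultimately show ?thesis by simp
  qed
  have "real (Wh X + Wh (X div 4) + 2  *  Wh (X div 8)) \<le> bW x + bW (x/4) + 2  *  bW (x/8)"
    using w1 w4 w8 by simp
  also have "\<dots> = 4/9  *  (x  *  ln x) + 5/6  *  x + 4/9  *  ln (x + 1) + 1
              + (4/9  *  ((x/4)  *  (ln x - 2 * ln 2)) + 5/6  *  (x/4) + 4/9  *  ln (x/4 + 1) + 1)
              + 2  *  (4/9  *  ((x/8)  *  (ln x - 3 * ln 2)) + 5/6  *  (x/8) + 4/9  *  ln (x/8 + 1) + 1)"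
    unfolding bW_def l4[symmetric] l8[symmetric] by simp
  finally have "real (Wh X + Wh (X div 4) + 2  *  Wh (X div 8)) \<le> \<dots>" .
  from F_helper[OF this] show ?thesis unfolding x_def[symmetric] using x8 by simp
qed

definition RHS :: "real \<Rightarrow> real" where
  "RHS q = 3  *  sqrt q / (2  *  pi)  *  (ln q + 5 - 2  *  ln 6)"

lemma sqrt3_lower: "1732/1000 \<le> sqrt (3::real)"
  by (rule real_le_rsqrt) (simp add: power2_eq_square)

lemma ln6_eq: "ln (6::real) = ln 2 + ln 3"
  using ln_mult[of "2::real" 3] by simp

lemma rhs_lower:
  fixes x q :: real assumes x: "x \<ge> 1" and q: "3  *  x^2 \<le> 4  *  q"
  shows "3  *  (1732/1000) / (4  *  (31416/10000))  *  x  *  (2  *  ln x + 11285/10000) \<le> RHS q"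
proof -
  have qpos: "q > 0" using x q by (smt (verit) one_le_power)
  have sq: "sqrt q \<ge> 1732/1000  *  x / 2"
  proof -
    have "sqrt (3  *  x^2 / 4) \<le> sqrt q" using q by simp
    moreover have "sqrt (3  *  x^2 / 4) = sqrt 3  *  x / 2"
      using x by (simp add: real_sqrt_mult real_sqrt_divide)
    moreover have "1732/1000  *  x / 2 \<le> sqrt 3  *  x / 2" using sqrt3_lower x by simp
    ultimately show ?thesis by linarith
  qed
  have lq: "ln q \<ge> ln 3 + 2  *  ln x - 2  *  ln 2"
  proof -
    have "ln (3  *  x^2 / 4) \<le> ln q" using q x qpos by (subst ln_le_cancel_iff) auto
    moreover have "ln (3  *  x^2 / 4) = ln 3 + 2  *  ln x - 2  *  ln 2"
    proof -
      have "ln (3  *  x^2 / 4) = ln (3  *  x^2) - ln 4" using x by (simp add: ln_div)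
      also have "ln (3  *  x^2) = ln 3 + ln (x^2)" using x by (simp add: ln_mult)
      also have "ln (x^2) = 2  *  ln x" using x ln_realpow[of x 2] by simp
      also have "ln (4::real) = 2  *  ln 2" using ln_realpow[of "2::real" 2] by simp
      finally show ?thesis by simp
    qed
    ultimately show ?thesis by simp
  qed
  have M: "ln q + 5 - 2  *  ln 6 \<ge> 2  *  ln x + 11285/10000"
    using lq ln6_eq ln2_upper ln3_upper by linarith
  have lx0: "ln x \<ge> 0" using x by simp
  have "3  *  (1732/1000) / (4  *  (31416/10000))  *  x  *  (2  *  ln x + 11285/10000)
      = (3 / (2  *  (31416/10000)))  *  (1732/1000  *  x / 2)  *  (2  *  ln x + 11285/10000)" by simp
  also have "\<dots> \<le> (3 / (2  *  pi))  *  sqrt q  *  (ln q + 5 - 2  *  ln 6)"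
  proof (intro mult_mono)
    show "3 / (2  *  (31416/10000)) \<le> 3 / (2  *  pi)" using pi_upper pi_gt_zero by (intro divide_left_mono) auto
  qed (use sq M lx0 x qpos pi_gt_zero in auto)
  also have "\<dots> = RHS q" by (simp add: RHS_def)
  finally show ?thesis .
qed

lemma big_helper:
  fixes F x lx l2 L1 xl :: real
  assumes "F \<le> 2/3  *  xl - 5/9  *  xl2 + 5/4  *  x + 16/9  *  L1 + 4"
    "L1 \<le> lx + 1" "xl2 \<ge> x  *  (693/1000)" "xl \<ge> x  *  (415/100)" "xl \<ge> 64  *  lx" "x \<ge> 64"
    "R \<ge> 3  *  (1732/1000) / (4  *  (31416/10000))  *  (2  *  xl + x  *  (11285/10000))"
  shows "F \<le> R"
  using assms by (simp add: field_simps)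

lemma big_case:
  fixes X :: int and q :: real
  assumes X: "X \<ge> 64" and q: "3  *  (real_of_int X)^2 \<le> 4  *  q"
  shows "real (Wh X + Wh (X div 4) + 2  *  Wh (X div 8)) \<le> RHS q"
proof -
  define x where "x = real_of_int X"
  have x64: "x \<ge> 64" using X by (simp add: x_def)
  have Fu: "real (Wh X + Wh (X div 4) + 2  *  Wh (X div 8)) \<le>
    2/3  *  (x  *  ln x) - 5/9  *  (x  *  ln 2) + 5/4  *  x + 16/9  *  ln (x + 1) + 4"
    using F_upper[of X] X unfolding x_def by simp
  have L1: "ln (x + 1) \<le> ln x + 1"
  proof -
    have "ln (x + 1) \<le> ln x + 1 / x" using ln_succ_le[of x] x64 by simp
    moreover have "1 / x \<le> 1" using x64 by simp
    ultimately show ?thesis by simp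
  qed
  have xl2: "x  *  ln 2 \<ge> x  *  (693/1000)" using ln2_lower x64 by (intro mult_left_mono) auto
  have lx: "ln x \<ge> 415/100"
  proof -
    have "ln (64::real) = 6  *  ln 2" using ln_realpow[of "2::real" 6] by simp
    hence "ln (64::real) \<ge> 415/100" using ln2_lower by simp
    moreover have "ln 64 \<le> ln x" using x64 by simp
    ultimately show ?thesis by simp
  qed
  have xl1: "x  *  ln x \<ge> x  *  (415/100)" using lx x64 by (intro mult_left_mono) auto
  have xl3: "x  *  ln x \<ge> 64  *  ln x" using lx x64 by (intro mult_right_mono) auto
  have R: "RHS q \<ge> 3  *  (1732/1000) / (4  *  (31416/10000))  *  (2  *  (x  *  ln x) + x  *  (11285/10000))"
    using rhs_lower[of x q] x64 q unfolding x_def by (simp add: algebra_simps)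
  show ?thesis by (rule big_helper[OF Fu L1 xl2 xl1 xl3 x64 R])
qed

fun dsum :: "int \<Rightarrow> nat \<Rightarrow> int" where
  "dsum Y 0 = 0"
| "dsum Y (Suc n) = dsum Y n + (if odd (int (Suc n)) then Y div int (Suc n) else 0)"

fun lgf :: "nat \<Rightarrow> int \<Rightarrow> nat" where
  "lgf 0 n = 0"
| "lgf (Suc f) n = (if n < 2 then 0 else Suc (lgf f (n div 2)))"

definition whc :: "int \<Rightarrow> int" where
  "whc Y = dsum Y (nat Y) - dsum (Y div 9) (nat (Y div 9))"

definition Fc :: "int \<Rightarrow> int" where
  "Fc X = whc X + whc (X div 4) + 2  *  whc (X div 8)"

definition pmin :: "int \<Rightarrow> int" where
  "pmin X = max 5 ((3  *  X^2 + 3) div 4)"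

definition chk :: "int \<Rightarrow> bool" where
  "chk X = (let pm = pmin X; k = lgf 20 pm; S = pm + 2^k;
              MD = int k  *  6930  *  S + 20000  *  (pm - 2^k) + 14162  *  S
            in 0 \<le> MD \<and> (2  *  31416  *  Fc X  *  (10000  *  S))^2 \<le> 9  *  pm  *  MD^2  *  100000000)"

lemma chk_all: "list_all (\<lambda>n. chk (int n)) [0..<64]"
  by code_simp

lemma dsum_eq: "dsum Y n = (\<Sum>d\<in>{1..int n}. if odd d then Y div d else 0)"
proof (induction n)
  case 0 thus ?case by simp
next
  case (Suc n)
  have "{1..int (Suc n)} = insert (int (Suc n)) {1..int n}" by auto
  thus ?case using Suc.IH by simp
qed

lemma Dh_int: "int (Dh Y) = (\<Sum>d\<in>{1..Y}. if odd d then Y div d else 0)"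
proof -
  have "real_of_int (int (Dh Y)) = real (Dh Y)" by simp
  also have "\<dots> = real_of_int (\<Sum>d\<in>{1..Y}. if odd d then Y div d else 0)"
    unfolding Dh_sum of_int_sum by (intro sum.cong) auto
  finally show ?thesis by (simp only: of_int_eq_iff)
qed

lemma whc_eq: "Y \<ge> 0 \<Longrightarrow> whc Y = int (Wh Y)"
proof -
  assume Y: "Y \<ge> 0"
  have "dsum Y (nat Y) = int (Dh Y)" using Y by (simp add: dsum_eq Dh_int)
  moreover have "dsum (Y div 9) (nat (Y div 9)) = int (Dh (Y div 9))" using Y by (simp add: dsum_eq Dh_int)
  ultimately show ?thesis unfolding whc_def using Wh_Dh[of Y] by linarith
qed

lemma Fc_eq: "X \<ge> 0 \<Longrightarrow> Fc X = int (Wh X + Wh (X div 4) + 2  *  Wh (X div 8))"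
  unfolding Fc_def by (simp add: whc_eq)

lemma lgf_le: "n \<ge> 1 \<Longrightarrow> 2 ^ (lgf f n) \<le> n"
proof (induction f arbitrary: n)
  case 0 thus ?case by simp
next
  case (Suc f)
  show ?case
  proof (cases "n < 2")
    case True thus ?thesis using Suc.prems by simp
  next
    case False
    hence "n div 2 \<ge> 1" by simp
    hence "2 ^ lgf f (n div 2) \<le> n div 2" by (rule Suc.IH)
    hence "2  *  2 ^ lgf f (n div 2) \<le> 2  *  (n div 2)" by simp
    also have "\<dots> \<le> n" by simp
    finally show ?thesis using False by simp
  qed
qed

lemma ln_lower_k:
  fixes n :: real assumes k: "2 ^ k \<le> n"
  shows "real k  *  (693/1000) + 2  *  (n - 2^k) / (n + 2^k) \<le> ln n"
proof -
  define t :: real where "t = 2^k"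
  have t: "t > 0" "t \<le> n" using k by (simp_all add: t_def)
  have "ln n = ln t + (ln n - ln t)" by simp
  moreover have "ln t = real k  *  ln 2" unfolding t_def by (simp add: ln_realpow)
  moreover have "2  *  (n - t) / (n + t) \<le> ln n - ln t"
  proof (cases "t = n")
    case True thus ?thesis by simp
  next
    case False
    hence "t < n" using t by simp
    hence "ln n - ln t \<ge> 2  *  (n - t) / (t + n)" using t by (intro ln_inverse_approx_ge) auto
    thus ?thesis by (simp add: add.commute)
  qed
  moreover have "real k  *  (693/1000) \<le> real k  *  ln 2" using ln2_lower by (intro mult_left_mono) auto
  ultimately show ?thesis unfolding t_def by linarith
qed

lemma RHS_mono: "1 \<le> a \<Longrightarrow> a \<le> b \<Longrightarrow> RHS a \<le> RHS b"
proof -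
  assume ab: "1 \<le> a" "a \<le> b"
  have c: "5 - 2  *  ln 6 \<ge> (0::real)" using ln6_upper by simp
  have "3  *  sqrt a / (2  *  pi) \<le> 3  *  sqrt b / (2  *  pi)" using ab by (simp add: divide_right_mono)
  moreover have "ln a + 5 - 2  *  ln 6 \<le> ln b + 5 - 2  *  ln 6" using ab by simp
  moreover have "0 \<le> ln a" using ab by simp
  hence "0 \<le> ln a + 5 - 2  *  ln 6" using c by linarith
  moreover have "0 \<le> 3  *  sqrt b / (2  *  pi)" using ab by simp
  ultimately show ?thesis unfolding RHS_def by (intro mult_mono) auto
qed

lemma chk_sound:
  fixes X :: int assumes X: "X \<ge> 0" and c: "chk X"
  shows "real (Wh X + Wh (X div 4) + 2  *  Wh (X div 8)) \<le> RHS (real_of_int (pmin X))"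
proof -
  define pm where "pm = pmin X"
  define k where "k = lgf 20 pm"
  define S where "S = pm + 2^k"
  define MD where "MD = int k  *  6930  *  S + 20000  *  (pm - 2^k) + 14162  *  S"
  have pm5: "pm \<ge> 5" by (simp add: pm_def pmin_def)
  have kpm: "2^k \<le> pm" using lgf_le[of pm 20] pm5 by (simp add: k_def)
  have "(2::int)^k > 0" by simp
  hence Spos: "S > 0" using pm5 unfolding S_def by linarith
  have MD0: "0 \<le> MD" and ineq: "(2  *  31416  *  Fc X  *  (10000  *  S))^2 \<le> 9  *  pm  *  MD^2  *  100000000"
    using c unfolding chk_def Let_def pm_def[symmetric] k_def[symmetric] S_def[symmetric] MD_def[symmetric]
    by auto
  define F where "F = real (Wh X + Wh (X div 4) + 2  *  Wh (X div 8))"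
  have FF: "real_of_int (Fc X) = F" using Fc_eq[OF X] by (simp add: F_def)
  define s where "s = real_of_int S"
  define m where "m = real_of_int MD / (10000  *  s)"
  define q where "q = real_of_int pm"
  have s0: "s > 0" using Spos by (simp add: s_def)
  have q5: "q \<ge> 5" using pm5 by (simp add: q_def)
  have m0: "m \<ge> 0" using MD0 s0 by (simp add: m_def)
  have F0: "F \<ge> 0" by (simp add: F_def)
  have "real_of_int ((2  *  31416  *  Fc X  *  (10000  *  S))^2) \<le> real_of_int (9  *  pm  *  MD^2  *  100000000)"
    using ineq by (simp only: of_int_le_iff)
  hence "(2  *  31416  *  F  *  (10000  *  s))^2 \<le> 9  *  q  *  (real_of_int MD)^2  *  100000000"
    by (simp add: FF s_def q_def)
  also have "real_of_int MD = m  *  (10000  *  s)" using s0 by (simp add: m_def)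
  finally have ii: "(2  *  31416  *  F  *  (10000  *  s))^2 \<le> 9  *  q  *  (m  *  (10000  *  s))^2  *  100000000" .
  have e1: "(2  *  31416  *  F  *  (10000  *  s))^2 = (2  *  (31416/10000)  *  F)^2  *  ((10000  *  s)^2  *  100000000)"
    by (simp add: power2_eq_square algebra_simps)
  have e2: "9  *  q  *  (m  *  (10000  *  s))^2  *  100000000 = (9  *  q  *  m^2)  *  ((10000  *  s)^2  *  100000000)"
    by (simp add: power_mult_distrib algebra_simps)
  have "(2  *  (31416/10000)  *  F)^2  *  ((10000  *  s)^2  *  100000000) \<le> (9  *  q  *  m^2)  *  ((10000  *  s)^2  *  100000000)"
    using ii e1 e2 by simp
  moreover have "(10000  *  s)^2  *  100000000 > 0" using s0 by simp
  ultimately have sq: "(2  *  (31416/10000)  *  F)^2 \<le> 9  *  q  *  m^2" by (rule mult_right_le_imp_le)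
  have e: "(3  *  sqrt q  *  m)^2 = 9  *  q  *  m^2" using q5 by (simp add: power_mult_distrib)
  have sq3: "(2  *  (31416/10000)  *  F)^2 \<le> (3  *  sqrt q  *  m)^2" using sq e by simp
  have nn: "0 \<le> 3  *  sqrt q  *  m" using m0 q5 by simp
  have "2  *  (31416/10000)  *  F \<le> 3  *  sqrt q  *  m" by (rule power2_le_imp_le[OF sq3 nn])
  hence F1: "F \<le> 3  *  sqrt q  *  m / (2  *  (31416/10000))" by (simp add: pos_le_divide_eq mult.commute)
  also have "\<dots> \<le> 3  *  sqrt q  *  m / (2  *  pi)"
    by (rule divide_left_mono[OF _ nn]) (use pi_upper pi_gt_zero in simp_all)
  also have "m \<le> ln q + 5 - 2  *  ln 6"
  proof -
    have sq2: "s = q + 2^k" by (simp add: s_def S_def q_def)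
    have eMD: "real_of_int MD = real k  *  6930  *  s + 20000  *  (q - 2^k) + 14162  *  s"
      by (simp add: MD_def s_def S_def q_def)
    have "m = (real k  *  6930  *  s + 20000  *  (q - 2^k) + 14162  *  s) / (10000  *  s)"
      by (simp add: m_def eMD)
    also have "\<dots> = real k  *  (693/1000) + 2  *  (q - 2^k) / s + 5 - 2  *  (17919/10000)"
      using s0 by (simp add: add_divide_distrib) (simp add: field_simps)
    finally have "m = real k  *  (693/1000) + 2  *  (q - 2^k) / (q + 2^k) + 5 - 2  *  (17919/10000)"
      by (simp add: sq2)
    moreover have "real k  *  (693/1000) + 2  *  (q - 2^k) / (q + 2^k) \<le> ln q"
      using ln_lower_k[of k q] kpm by (simp add: q_def)
    ultimately show ?thesis using ln6_upper by linarith
  qed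
  hence "3  *  sqrt q  *  m / (2  *  pi) \<le> 3  *  sqrt q  *  (ln q + 5 - 2  *  ln 6) / (2  *  pi)"
    using q5 by (intro divide_right_mono mult_left_mono) auto
  finally show ?thesis by (simp add: F_def RHS_def q_def pm_def)
qed

theorem corollary3p10:
  fixes p :: nat
  assumes "prime p" and "p \<ge> 5"
  shows "real (class_number (- 4  *  int p))
           \<le> 3  *  sqrt (real p) / (2  *  pi)  *  (ln (real p) + 5 - 2  *  ln 6)"
proof -
  define P where "P = int p"
  have pP: "prime P" using assms(1) by (simp add: P_def prime_nat_int_transfer)
  have oP: "odd P" using prime_odd_int[OF pP] assms(2) by (simp add: P_def)
  define r where "r = sqrt (4  *  real p / 3)"
  define X where "X = \<lfloor>r\<rfloor>"
  have r0: "r \<ge> 0" by (simp add: r_def)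
  have X0: "X \<ge> 0" using r0 by (simp add: X_def)
  have Xr: "real_of_int X \<le> r" by (simp add: X_def)
  have Xmax: "a \<le> X" if a: "3  *  a^2 \<le> 4  *  P" for a :: int
  proof -
    have "real_of_int a \<le> r"
    proof (cases "a \<le> 0")
      case True thus ?thesis using r0 by simp
    next
      case False
      have "real_of_int (3  *  a^2) \<le> real_of_int (4  *  P)" using a by (simp only: of_int_le_iff)
      hence "(real_of_int a)^2 \<le> 4  *  real p / 3" by (simp add: P_def)
      thus ?thesis unfolding r_def by (rule real_le_rsqrt)
    qed
    thus ?thesis by (simp add: X_def le_floor_iff)
  qed
  have X3: "3  *  X^2 \<le> 4  *  P"
  proof -
    have "(real_of_int X)^2 \<le> r^2" using Xr X0 by (intro power_mono) auto
    also have "r^2 = 4  *  real p / 3" by (simp add: r_def)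
    finally have "real_of_int (3  *  X^2) \<le> real_of_int (4  *  P)" by (simp add: P_def)
    thus ?thesis by (simp only: of_int_le_iff)
  qed
  have XP: "X < P"
  proof -
    have "4  *  real p / 3 < (real p)^2" using assms(2) by (simp add: power2_eq_square)
    hence "r < sqrt ((real p)^2)" unfolding r_def by (simp only: real_sqrt_less_iff)
    hence "r < real p" by simp
    hence "real_of_int X < real_of_int P" using Xr by (simp add: P_def)
    thus ?thesis by (simp only: of_int_less_iff)
  qed
  define FW where "FW = Wh X + Wh (X div 4) + 2  *  Wh (X div 8)"
  have "class_number (-4  *  P) \<le> card (Pairs P X)" by (rule class_number_le_Pairs[OF Xmax])
  also have "\<dots> \<le> FW" unfolding FW_def by (rule Pairs_bound[OF pP oP XP])
  finally have cn: "real (class_number (-4  *  P)) \<le> real FW" by simp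
  have "real FW \<le> RHS (real p)"
  proof (cases "X \<ge> 64")
    case True
    have "3  *  (real_of_int X)^2 \<le> 4  *  real p"
    proof -
      have "real_of_int (3  *  X^2) \<le> real_of_int (4  *  P)" using X3 by (simp only: of_int_le_iff)
      thus ?thesis by (simp add: P_def)
    qed
    thus ?thesis unfolding FW_def by (rule big_case[OF True])
  next
    case False
    have "nat X < 64" using False by simp
    moreover have "\<forall>n\<in>{0..<64}. chk (int n)" using chk_all by (simp add: list_all_iff)
    moreover have "nat X \<in> {0..<64}" using \<open>nat X < 64\<close> by simp
    ultimately have "chk (int (nat X))" by blast
    hence cX: "chk X" using X0 by simp
    have "real FW \<le> RHS (real_of_int (pmin X))" unfolding FW_def by (rule chk_sound[OF X0 cX])
    also have "\<dots> \<le> RHS (real p)"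
    proof (rule RHS_mono)
      show "1 \<le> real_of_int (pmin X)" by (simp add: pmin_def)
      have "(3  *  X^2 + 3) div 4 \<le> (4  *  P + 3) div 4" using X3 by (intro zdiv_mono1) auto
      also have "(4  *  P + 3) div 4 = P" by simp
      finally have "pmin X \<le> P" using assms(2) by (simp add: pmin_def P_def)
      thus "real_of_int (pmin X) \<le> real p" by (simp add: P_def)
    qed
    finally show ?thesis .
  qed
  thus ?thesis using cn by (simp add: RHS_def P_def)
qed

end
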